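(* Let $p\in(0,1)$, $d\ge2$ an integer, $\alpha>0$, $\beta=(d-1)\big(\frac{p}{d-p}-\alpha\big)$ and $0<s<\beta$. Define for $u\in(-1,0)$ $$f_{\alpha,s}(u)=\ln(1+pu)+\alpha\ln(-u)-(d-1)\Big(\frac{p}{d-p}-\alpha\Big)\ln(1+u)+s\big(\ln(1+u)-\ln(1-1/d)\big).$$ Then $f_{\alpha,s}$ has two stationary points $u_{-,s},u_{+,s}$ with $-1<u_{-,s}<-1/d<u_{+,s}<0$. Moreover, $u_{-,s}$ is strictly decreasing in $s$ and $u_{+,s}$ is strictly increasing in $s$. *)

theory Defs
  imports Complex_Main
begin

definition f_alpha_s :: "real \<Rightarrow> nat \<Rightarrow> real \<Rightarrow> real \<Rightarrow> real \<Rightarrow> real" where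
  "f_alpha_s p d \<alpha> s u =
     ln (1 + p * u) + \<alpha> * ln (- u)
     - (real d - 1) * (p / (real d - p) - \<alpha>) * ln (1 + u)
     + s * (ln (1 + u) - ln (1 - 1 / real d))"

definition stationary_pt :: "(real \<Rightarrow> real) \<Rightarrow> real \<Rightarrow> bool" where
  "stationary_pt g u \<longleftrightarrow> (g has_real_derivative 0) (at u)"

end

theory Submission
  imports Defs
begin

definition QQ :: "real \<Rightarrow> real \<Rightarrow> real \<Rightarrow> real \<Rightarrow> real" where
  "QQ p \<alpha> g u = p*(1+\<alpha>-g)*u^2 + (p + \<alpha>*(1+p) - g)*u + \<alpha>"

lemma QQ_diff: "QQ p \<alpha> g u - QQ p \<alpha> g' u = (g' - g) * (u*(1+p*u))"
  unfolding QQ_def by (simp add: algebra_simps power2_eq_square)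

lemma deriv_f:
  assumes "0 < p" "p < 1" "-1 < u" "u < 0"
  shows "(f_alpha_s p d \<alpha> s has_real_derivative
     (p/(1+p*u) + \<alpha>/u - ((real d - 1)*(p/(real d - p) - \<alpha>) - s)/(1+u))) (at u)"
proof -
  have e: "f_alpha_s p d \<alpha> s = (\<lambda>u. ln (1 + p * u) + \<alpha> * ln (- u)
     - (real d - 1) * (p / (real d - p) - \<alpha>) * ln (1 + u)
     + s * (ln (1 + u) - ln (1 - 1 / real d)))"
    by (rule ext) (simp add: f_alpha_s_def)
  have h1: "1 + p*u > 0"
  proof -
    have "p * u > p * (-1)" using assms by (intro mult_strict_left_mono) auto
    then show ?thesis using assms by linarith
  qed
  have h2: "1 + u > 0" "-u > 0" using assms by auto
  show ?thesis unfolding e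
    apply (intro derivative_eq_intros)
    using h1 h2 apply (auto simp: diff_divide_distrib)
    done
qed

lemma stat_iff:
  assumes "0 < p" "p < 1" "-1 < u" "u < 0"
  shows "stationary_pt (f_alpha_s p d \<alpha> s) u \<longleftrightarrow>
     QQ p \<alpha> ((real d - 1)*(p/(real d - p) - \<alpha>) - s) u = 0"
proof -
  define g where "g = (real d - 1)*(p/(real d - p) - \<alpha>) - s"
  have h1: "1 + p*u > 0"
  proof -
    have "p * u > p * (-1)" using assms by (intro mult_strict_left_mono) auto
    then show ?thesis using assms by linarith
  qed
  have h2: "1 + u > 0" "u \<noteq> 0" using assms by auto
  have D: "(f_alpha_s p d \<alpha> s has_real_derivative (p/(1+p*u) + \<alpha>/u - g/(1+u))) (at u)"
    using deriv_f[OF assms] unfolding g_def .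
  have st: "stationary_pt (f_alpha_s p d \<alpha> s) u \<longleftrightarrow> p/(1+p*u) + \<alpha>/u - g/(1+u) = 0"
    unfolding stationary_pt_def using D DERIV_unique by metis
  have eq: "QQ p \<alpha> g u = (p/(1+p*u) + \<alpha>/u - g/(1+u)) * (u*(1+p*u)*(1+u))"
  proof -
    have a: "1+p*u \<noteq> 0" "1+u \<noteq> 0" using h1 h2 by auto
    have "(p/(1+p*u) + \<alpha>/u - g/(1+u)) * (u*(1+p*u)*(1+u))
        = p*u*(1+u) + \<alpha>*(1+p*u)*(1+u) - g*u*(1+p*u)"
    proof -
      have t1: "p/(1+p*u) * (u*(1+p*u)*(1+u)) = p*u*(1+u)" using a by (simp add: field_simps)
      have t2: "\<alpha>/u * (u*(1+p*u)*(1+u)) = \<alpha>*(1+p*u)*(1+u)" using h2 by (simp add: field_simps)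
      have t3: "g/(1+u) * (u*(1+p*u)*(1+u)) = g*u*(1+p*u)" using a by (simp add: field_simps)
      show ?thesis unfolding left_diff_distrib distrib_right t1 t2 t3 ..
    qed
    then show ?thesis unfolding QQ_def by (simp add: algebra_simps power2_eq_square)
  qed
  have nz: "u*(1+p*u)*(1+u) \<noteq> 0" using h1 h2 by simp
  show ?thesis unfolding st g_def[symmetric] eq using nz by simp
qed

lemma QQ_cont: "continuous_on S (QQ p \<alpha> g)"
  unfolding QQ_def by (intro continuous_intros)

lemma roots:
  fixes p \<alpha> \<beta> g :: real and d :: nat
  assumes "0 < p" "p < 1" "d \<ge> 2" "\<alpha> > 0"
    and "\<beta> = (real d - 1) * (p / (real d - p) - \<alpha>)" and "0 < g" "g < \<beta>"
  shows "\<exists>a b. -1 < a \<and> a < -1/real d \<and> -1/real d < b \<and> b < 0 \<and> p*(1+\<alpha>-g) > 0 \<and>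
     (\<forall>u. QQ p \<alpha> g u = p*(1+\<alpha>-g)*(u-a)*(u-b))"
proof -
  define D where "D = real d"
  have D2: "D \<ge> 2" using assms(3) unfolding D_def by simp
  have Dp: "D - p > 0" using D2 assms by simp
  have Qm1: "QQ p \<alpha> g (-1) > 0"
  proof -
    have "QQ p \<alpha> g (-1) = g*(1-p)" unfolding QQ_def by (simp add: algebra_simps power2_eq_square)
    then show ?thesis using assms by simp
  qed
  have Q0: "QQ p \<alpha> g 0 > 0" unfolding QQ_def using assms by simp
  have Qd: "QQ p \<alpha> g (-1/D) < 0"
  proof -
    have bb: "\<beta>*(D - p) = (D - 1)*(p - \<alpha>*(D - p))" using assms(5) Dp unfolding D_def[symmetric]
      by (simp add: field_simps)
    have lt: "g*(D-p) < \<beta>*(D-p)" using assms(7) Dp by simp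
    have "D^2 * QQ p \<alpha> g (-1/D) = g*(D-p) - (D-1)*(p - \<alpha>*(D-p))"
      unfolding QQ_def using D2 by (simp add: field_simps power2_eq_square)
    also have "\<dots> < 0" using lt bb by linarith
    finally have "D^2 * QQ p \<alpha> g (-1/D) < 0" .
    moreover have "D^2 > 0" using D2 by simp
    ultimately show ?thesis by (simp add: mult_less_0_iff)
  qed
  have dlt: "-1 < -1/D" "-1/D < 0" using D2 by (auto simp: field_simps)
  obtain a where a: "-1 \<le> a" "a \<le> -1/D" "QQ p \<alpha> g a = 0"
    using IVT2'[of "QQ p \<alpha> g" "-1/D" 0 "-1"] Qm1 Qd dlt QQ_cont by force
  obtain b where b: "-1/D \<le> b" "b \<le> 0" "QQ p \<alpha> g b = 0"
    using IVT'[of "QQ p \<alpha> g" "-1/D" 0 0] Q0 Qd dlt QQ_cont by force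
  have a': "-1 < a" "a < -1/D" using a Qm1 Qd by (auto simp: order.order_iff_strict)
  have b': "-1/D < b" "b < 0" using b Q0 Qd by (auto simp: order.order_iff_strict)
  define A where "A = p*(1+\<alpha>-g)"
  define L where "L = (p + \<alpha>*(1+p) - g) + A*(a+b)"
  define M where "M = \<alpha> - A*a*b"
  have lin: "QQ p \<alpha> g u = A*(u-a)*(u-b) + L*u + M" for u
    unfolding QQ_def A_def L_def M_def by (simp add: algebra_simps power2_eq_square)
  have "L*a + M = 0" "L*b + M = 0" using lin[of a] lin[of b] a b by auto
  then have "L*a - L*b = 0" by linarith
  then have "L*(a-b) = 0" by (simp add: right_diff_distrib)
  moreover have "a \<noteq> b" using a' b' by simp
  ultimately have L0: "L = 0" by simp
  then have M0: "M = 0" using \<open>L*a + M = 0\<close> by simp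
  have Qf: "\<forall>u. QQ p \<alpha> g u = A*(u-a)*(u-b)" using lin L0 M0 by simp
  have "A*(0-a)*(0-b) > 0" using Qf Q0 by metis
  moreover have "(0-a)*(0-b) > 0" using a' b' dlt by (intro mult_pos_pos) auto
  ultimately have "A > 0"
    by (metis mult.assoc zero_less_mult_iff not_less_iff_gr_or_eq)
  show ?thesis using a' b' Qf \<open>A > 0\<close> unfolding A_def D_def by blast
qed

lemma neg_between:
  fixes A a b x :: real
  assumes "A > 0" "A*(x-a)*(x-b) < 0" "a < b"
  shows "a < x \<and> x < b"
proof -
  have "(x-a)*(x-b) < 0" using assms by (metis mult.assoc zero_less_mult_iff not_less_iff_gr_or_eq mult_less_0_iff)
  then show ?thesis using assms(3) by (auto simp: mult_less_0_iff)
qed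

lemma px_pos: "0 < p \<Longrightarrow> p < 1 \<Longrightarrow> -1 < (x::real) \<Longrightarrow> x < 0 \<Longrightarrow> x*(1+p*x) < 0"
proof -
  assume h: "0 < p" "p < 1" "-1 < x" "x < 0"
  have "p * x > p * (-1)" using h by (intro mult_strict_left_mono) auto
  then have "1 + p*x > 0" using h by linarith
  then show ?thesis using h by (simp add: mult_less_0_iff)
qed

theorem lemma5p10:
  fixes p \<alpha> \<beta> :: real and d :: nat
  assumes "0 < p" "p < 1" "d \<ge> 2" "\<alpha> > 0"
    and "\<beta> = (real d - 1) * (p / (real d - p) - \<alpha>)"
  shows "\<exists>um up :: real \<Rightarrow> real.
     (\<forall>s\<in>{0<..<\<beta>}.
        {u\<in>{-1<..<0}. stationary_pt (f_alpha_s p d \<alpha> s) u} = {um s, up s} \<and>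
        -1 < um s \<and> um s < -1 / real d \<and> -1 / real d < up s \<and> up s < 0) \<and>
     (\<forall>s\<in>{0<..<\<beta>}. \<forall>t\<in>{0<..<\<beta>}. s < t \<longrightarrow> um t < um s \<and> up s < up t)"
proof -
  define R where "R = (\<lambda>s a b. -1 < a \<and> a < -1/real d \<and> -1/real d < b \<and> b < 0 \<and>
     p*(1+\<alpha>-(\<beta>-s)) > 0 \<and> (\<forall>u. QQ p \<alpha> (\<beta>-s) u = p*(1+\<alpha>-(\<beta>-s))*(u-a)*(u-b)))"
  have "\<forall>s. \<exists>ab. s \<in> {0<..<\<beta>} \<longrightarrow> R s (fst ab) (snd ab)"
  proof
    fix s
    show "\<exists>ab. s \<in> {0<..<\<beta>} \<longrightarrow> R s (fst ab) (snd ab)"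
    proof (cases "s \<in> {0<..<\<beta>}")
      case True
      then obtain a b where "R s a b"
        using roots[OF assms, of "\<beta> - s"] unfolding R_def by auto
      then show ?thesis by (metis fst_conv snd_conv)
    qed auto
  qed
  then obtain F where F: "\<And>s. s \<in> {0<..<\<beta>} \<Longrightarrow> R s (fst (F s)) (snd (F s))" by metis
  define um where "um = (\<lambda>s. fst (F s))"
  define up where "up = (\<lambda>s. snd (F s))"
  have Rs: "s \<in> {0<..<\<beta>} \<Longrightarrow> R s (um s) (up s)" for s using F unfolding um_def up_def by blast
  have stat: "u \<in> {-1<..<0} \<Longrightarrow> stationary_pt (f_alpha_s p d \<alpha> s) u \<longleftrightarrow> QQ p \<alpha> (\<beta>-s) u = 0" for u s
    using stat_iff[OF assms(1,2), of u d \<alpha> s] assms(5) by simp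
  have P1: "{u\<in>{-1<..<0}. stationary_pt (f_alpha_s p d \<alpha> s) u} = {um s, up s} \<and>
        -1 < um s \<and> um s < -1 / real d \<and> -1 / real d < up s \<and> up s < 0" if s: "s \<in> {0<..<\<beta>}" for s
  proof -
    have r: "R s (um s) (up s)" using Rs s .
    have dpos: "-1/real d < 0" using assms(3) by simp
    have "u \<in> {-1<..<0} \<and> stationary_pt (f_alpha_s p d \<alpha> s) u \<longleftrightarrow> u = um s \<or> u = up s" for u
    proof -
      have "QQ p \<alpha> (\<beta>-s) u = 0 \<longleftrightarrow> u = um s \<or> u = up s"
        using r unfolding R_def by auto
      moreover have "um s \<in> {-1<..<0}" "up s \<in> {-1<..<0}" using r dpos unfolding R_def by auto
      ultimately show ?thesis using stat by blast
    qed
    then show ?thesis using r unfolding R_def by auto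
  qed
  have P2: "um t < um s \<and> up s < up t"
    if s: "s \<in> {0<..<\<beta>}" and t: "t \<in> {0<..<\<beta>}" and st: "s < t" for s t
  proof -
    have rs: "R s (um s) (up s)" and rt: "R t (um t) (up t)" using Rs s t by auto
    have dpos: "-1/real d < 0" using assms(3) by simp
    have key: "QQ p \<alpha> (\<beta>-t) x < 0" if "QQ p \<alpha> (\<beta>-s) x = 0" "-1 < x" "x < 0" for x
    proof -
      have "QQ p \<alpha> (\<beta>-t) x - QQ p \<alpha> (\<beta>-s) x = ((\<beta>-s) - (\<beta>-t)) * (x*(1+p*x))" by (rule QQ_diff)
      moreover have "x*(1+p*x) < 0" using px_pos assms(1,2) that(2,3) by blast
      moreover have "(\<beta>-s) - (\<beta>-t) > 0" using st by simp
      ultimately show ?thesis using that(1) by (simp add: mult_pos_neg)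
    qed
    have "QQ p \<alpha> (\<beta>-s) (um s) = 0" "QQ p \<alpha> (\<beta>-s) (up s) = 0" using rs unfolding R_def by auto
    moreover have "-1 < um s" "um s < 0" "-1 < up s" "up s < 0" using rs dpos unfolding R_def by auto
    ultimately have n1: "QQ p \<alpha> (\<beta>-t) (um s) < 0" and n2: "QQ p \<alpha> (\<beta>-t) (up s) < 0"
      using key by auto
    have A: "p*(1+\<alpha>-(\<beta>-t)) > 0" "um t < up t" using rt unfolding R_def by auto
    have Qt: "\<And>u. QQ p \<alpha> (\<beta>-t) u = p*(1+\<alpha>-(\<beta>-t))*(u-um t)*(u-up t)" using rt unfolding R_def by auto
    have "um t < um s" using neg_between[OF A(1) _ A(2)] n1 Qt by metis
    moreover have "up s < up t" using neg_between[OF A(1) _ A(2)] n2 Qt by metis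
    ultimately show ?thesis by simp
  qed
  show ?thesis
    apply (rule exI[of _ um], rule exI[of _ up])
    using P1 P2 by blast
qed

end
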